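(* The path collection $\mathcal{P}_{light}=\{\Pi_{\langle x,y\rangle}:\langle x,y\rangle\text{ is an ordered light pair}\}$ satisfies: every path in $\mathcal{P}_{light}$ has length $O(D)$, and every edge of $G$ appears in at most $\widetilde{O}(D)$ paths of $\mathcal{P}_{light}$.
   Context: $G=(V,E)$ is a connected $n$-vertex graph of diameter $D$ with no cut vertex, $T$ a BFS tree rooted at $s$, $\pi(u,v)$ the $T$-path, $T_x$ the subtree at $x$, $V_x=V(T_x)\setminus\{x\}$; $\widetilde{O}$ hides polylog$(n)$ factors. The heavy child $x_h$ of a non-leaf $x$ is the child with largest subtree (ties broken consistently); other children and their edges to $x$ are light. $\mathcal{C}_x$ is the set of components of $G[V_x]$, $C_{x,v}$ the one containing $v$; for each $C\in\mathcal{C}_x$ a fixed edge $(u_C,v_C)\in E$ with $v_C\in C$, $u_C\notin V(T_x)$, and $\pi_x(s,C)=\pi(s,u_C)\circ(u_C,v_C)$. $x,y$ is independent if neither is a $T$-ancestor of the other. For independent $x,y$, $C\in\mathcal{C}_x$ is fully-$y$-sensitive if $y\in\pi_x(s,C)$ and $\pi_x(s,C)$ contains no $T$-edge $(y,y')$ with $x\notin\pi_y(s,C_{y,y'})$; $\mathcal{FS}(x,y)$ is the set of such components. An ordered independent pair $\langle x,y\rangle$ is an ordered light pair if there is $C\in\mathcal{FS}(x,y)$ with $(y,y_h)\notin\pi_x(s,C)$. For each ordered light pair choose arbitrarily such a component $C^{\langle x,y\rangle}$ and let $\Pi_{\langle x,y\rangle}=\pi(x,v_{C^{\langle x,y\rangle}})\circ(v_{C^{\langle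 x,y\rangle}},u_{C^{\langle x,y\rangle}})\circ\pi(u_{C^{\langle x,y\rangle}},y)$. *)

theory Defs
  imports Complex_Main
begin

definition graph :: "'a set \<Rightarrow> 'a set set \<Rightarrow> bool" where
  "graph V E \<longleftrightarrow> finite V \<and> E \<subseteq> {{u, v} | u v. u \<in> V \<and> v \<in> V \<and> u \<noteq> v}"

definition walk :: "'a set set \<Rightarrow> 'a list \<Rightarrow> bool" where
  "walk E p \<longleftrightarrow> p \<noteq> [] \<and> (\<forall>i. Suc i < length p \<longrightarrow> {p ! i, p ! Suc i} \<in> E)"

definition conn_in :: "'a set set \<Rightarrow> 'a set \<Rightarrow> 'a \<Rightarrow> 'a \<Rightarrow> bool" where
  "conn_in E S u v \<longleftrightarrow> (\<exists>p. walk E p \<and> hd p = u \<and> last p = v \<and> set p \<subseteq> S)"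

definition connected_graph :: "'a set \<Rightarrow> 'a set set \<Rightarrow> bool" where
  "connected_graph V E \<longleftrightarrow> (\<forall>u\<in>V. \<forall>v\<in>V. conn_in E V u v)"

definition no_cut_vertex :: "'a set \<Rightarrow> 'a set set \<Rightarrow> bool" where
  "no_cut_vertex V E \<longleftrightarrow> (\<forall>w\<in>V. \<forall>u\<in>V - {w}. \<forall>v\<in>V - {w}. conn_in E (V - {w}) u v)"

definition gdist :: "'a set set \<Rightarrow> 'a \<Rightarrow> 'a \<Rightarrow> nat" where
  "gdist E u v = (LEAST n. \<exists>p. walk E p \<and> hd p = u \<and> last p = v \<and> length p = Suc n)"

definition diameter :: "'a set \<Rightarrow> 'a set set \<Rightarrow> nat" where
  "diameter V E = Max {gdist E u v | u v. u \<in> V \<and> v \<in> V}"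

definition edges_of :: "'a list \<Rightarrow> 'a set set" where
  "edges_of p = {{p ! i, p ! Suc i} | i. Suc i < length p}"

definition bfs_tree :: "'a set \<Rightarrow> 'a set set \<Rightarrow> 'a \<Rightarrow> ('a \<Rightarrow> 'a) \<Rightarrow> bool" where
  "bfs_tree V E s par \<longleftrightarrow> s \<in> V \<and>
     (\<forall>v\<in>V - {s}. par v \<in> V \<and> {v, par v} \<in> E \<and> gdist E s v = Suc (gdist E s (par v)))"

definition rootpath :: "'a set set \<Rightarrow> 'a \<Rightarrow> ('a \<Rightarrow> 'a) \<Rightarrow> 'a \<Rightarrow> 'a list" where
  "rootpath E s par v = map (\<lambda>i. (par ^^ i) v) [0..<Suc (gdist E s v)]"

definition tanc :: "'a set set \<Rightarrow> 'a \<Rightarrow> ('a \<Rightarrow> 'a) \<Rightarrow> 'a \<Rightarrow> 'a \<Rightarrow> bool" where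
  "tanc E s par x v \<longleftrightarrow> x \<in> set (rootpath E s par v)"

definition independent :: "'a set set \<Rightarrow> 'a \<Rightarrow> ('a \<Rightarrow> 'a) \<Rightarrow> 'a \<Rightarrow> 'a \<Rightarrow> bool" where
  "independent E s par x y \<longleftrightarrow> \<not> tanc E s par x y \<and> \<not> tanc E s par y x"

definition lca :: "'a set set \<Rightarrow> 'a \<Rightarrow> ('a \<Rightarrow> 'a) \<Rightarrow> 'a \<Rightarrow> 'a \<Rightarrow> 'a" where
  "lca E s par u v = (THE w. w \<in> set (rootpath E s par u) \<inter> set (rootpath E s par v) \<and>
      (\<forall>w' \<in> set (rootpath E s par u) \<inter> set (rootpath E s par v). gdist E s w' \<le> gdist E s w))"

text \<open>The T-path pi(u,v), as the vertex list u, ..., lca(u,v), ..., v.\<close>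
definition tpath :: "'a set set \<Rightarrow> 'a \<Rightarrow> ('a \<Rightarrow> 'a) \<Rightarrow> 'a \<Rightarrow> 'a \<Rightarrow> 'a list" where
  "tpath E s par u v =
     (let w = lca E s par u v
      in take (gdist E s u - gdist E s w + 1) (rootpath E s par u) @
         tl (rev (take (gdist E s v - gdist E s w + 1) (rootpath E s par v))))"

definition subtree :: "'a set \<Rightarrow> 'a set set \<Rightarrow> 'a \<Rightarrow> ('a \<Rightarrow> 'a) \<Rightarrow> 'a \<Rightarrow> 'a set" where
  "subtree V E s par x = {v \<in> V. tanc E s par x v}"

definition strict_subtree :: "'a set \<Rightarrow> 'a set set \<Rightarrow> 'a \<Rightarrow> ('a \<Rightarrow> 'a) \<Rightarrow> 'a \<Rightarrow> 'a set" where
  "strict_subtree V E s par x = subtree V E s par x - {x}"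

definition children :: "'a set \<Rightarrow> 'a \<Rightarrow> ('a \<Rightarrow> 'a) \<Rightarrow> 'a \<Rightarrow> 'a set" where
  "children V s par x = {c \<in> V - {s}. par c = x}"

definition heavy_child_fun :: "'a set \<Rightarrow> 'a set set \<Rightarrow> 'a \<Rightarrow> ('a \<Rightarrow> 'a) \<Rightarrow> ('a \<Rightarrow> 'a) \<Rightarrow> bool" where
  "heavy_child_fun V E s par h \<longleftrightarrow>
     (\<forall>x\<in>V. children V s par x \<noteq> {} \<longrightarrow>
        h x \<in> children V s par x \<and>
        (\<forall>c\<in>children V s par x. card (subtree V E s par c) \<le> card (subtree V E s par (h x))))"

definition comp_of :: "'a set \<Rightarrow> 'a set set \<Rightarrow> 'a \<Rightarrow> ('a \<Rightarrow> 'a) \<Rightarrow> 'a \<Rightarrow> 'a \<Rightarrow> 'a set" where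
  "comp_of V E s par x v = {w. conn_in E (strict_subtree V E s par x) v w}"

definition comps :: "'a set \<Rightarrow> 'a set set \<Rightarrow> 'a \<Rightarrow> ('a \<Rightarrow> 'a) \<Rightarrow> 'a \<Rightarrow> 'a set set" where
  "comps V E s par x = {comp_of V E s par x v | v. v \<in> strict_subtree V E s par x}"

definition comp_edges :: "'a set \<Rightarrow> 'a set set \<Rightarrow> 'a \<Rightarrow> ('a \<Rightarrow> 'a) \<Rightarrow>
    ('a \<Rightarrow> 'a set \<Rightarrow> 'a) \<Rightarrow> ('a \<Rightarrow> 'a set \<Rightarrow> 'a) \<Rightarrow> bool" where
  "comp_edges V E s par uC vC \<longleftrightarrow>
     (\<forall>x\<in>V - {s}. \<forall>C\<in>comps V E s par x.
        {uC x C, vC x C} \<in> E \<and> vC x C \<in> C \<and> uC x C \<in> V - subtree V E s par x)"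

definition piC :: "'a set set \<Rightarrow> 'a \<Rightarrow> ('a \<Rightarrow> 'a) \<Rightarrow> ('a \<Rightarrow> 'a set \<Rightarrow> 'a) \<Rightarrow> ('a \<Rightarrow> 'a set \<Rightarrow> 'a) \<Rightarrow>
    'a \<Rightarrow> 'a set \<Rightarrow> 'a list" where
  "piC E s par uC vC x C = tpath E s par s (uC x C) @ [vC x C]"

definition fully_sensitive :: "'a set \<Rightarrow> 'a set set \<Rightarrow> 'a \<Rightarrow> ('a \<Rightarrow> 'a) \<Rightarrow>
    ('a \<Rightarrow> 'a set \<Rightarrow> 'a) \<Rightarrow> ('a \<Rightarrow> 'a set \<Rightarrow> 'a) \<Rightarrow> 'a \<Rightarrow> 'a \<Rightarrow> 'a set \<Rightarrow> bool" where
  "fully_sensitive V E s par uC vC x y C \<longleftrightarrow>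
     C \<in> comps V E s par x \<and>
     y \<in> set (piC E s par uC vC x C) \<and>
     \<not> (\<exists>y'\<in>children V s par y. {y, y'} \<in> edges_of (piC E s par uC vC x C) \<and>
            x \<notin> set (piC E s par uC vC y (comp_of V E s par y y')))"

definition heavy_edge_on :: "'a set \<Rightarrow> 'a \<Rightarrow> ('a \<Rightarrow> 'a) \<Rightarrow> ('a \<Rightarrow> 'a) \<Rightarrow> 'a \<Rightarrow> 'a list \<Rightarrow> bool" where
  "heavy_edge_on V s par h y p \<longleftrightarrow> children V s par y \<noteq> {} \<and> {y, h y} \<in> edges_of p"

definition ordered_light_pair :: "'a set \<Rightarrow> 'a set set \<Rightarrow> 'a \<Rightarrow> ('a \<Rightarrow> 'a) \<Rightarrow> ('a \<Rightarrow> 'a) \<Rightarrow>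
    ('a \<Rightarrow> 'a set \<Rightarrow> 'a) \<Rightarrow> ('a \<Rightarrow> 'a set \<Rightarrow> 'a) \<Rightarrow> 'a \<Rightarrow> 'a \<Rightarrow> bool" where
  "ordered_light_pair V E s par h uC vC x y \<longleftrightarrow>
     x \<in> V \<and> y \<in> V \<and> independent E s par x y \<and>
     (\<exists>C. fully_sensitive V E s par uC vC x y C \<and>
          \<not> heavy_edge_on V s par h y (piC E s par uC vC x C))"

definition light_choice :: "'a set \<Rightarrow> 'a set set \<Rightarrow> 'a \<Rightarrow> ('a \<Rightarrow> 'a) \<Rightarrow> ('a \<Rightarrow> 'a) \<Rightarrow>
    ('a \<Rightarrow> 'a set \<Rightarrow> 'a) \<Rightarrow> ('a \<Rightarrow> 'a set \<Rightarrow> 'a) \<Rightarrow> ('a \<Rightarrow> 'a \<Rightarrow> 'a set) \<Rightarrow> bool" where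
  "light_choice V E s par h uC vC Csel \<longleftrightarrow>
     (\<forall>x y. ordered_light_pair V E s par h uC vC x y \<longrightarrow>
        fully_sensitive V E s par uC vC x y (Csel x y) \<and>
        \<not> heavy_edge_on V s par h y (piC E s par uC vC x (Csel x y)))"

text \<open>Pi_<x,y> = pi(x, v_C) o (v_C, u_C) o pi(u_C, y), as a vertex list.\<close>
definition light_path :: "'a set set \<Rightarrow> 'a \<Rightarrow> ('a \<Rightarrow> 'a) \<Rightarrow> ('a \<Rightarrow> 'a set \<Rightarrow> 'a) \<Rightarrow>
    ('a \<Rightarrow> 'a set \<Rightarrow> 'a) \<Rightarrow> ('a \<Rightarrow> 'a \<Rightarrow> 'a set) \<Rightarrow> 'a \<Rightarrow> 'a \<Rightarrow> 'a list" where
  "light_path E s par uC vC Csel x y =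
     (let C = Csel x y in tpath E s par x (vC x C) @ tpath E s par (uC x C) y)"

end

theory Submission
  imports Defs
begin

lemma double_count:
  fixes f :: "nat \<Rightarrow> nat"
  shows "(\<forall>j<m. f j \<le> f (Suc j)) \<Longrightarrow> 2 ^ card {j. j < m \<and> 2 * f j < f (Suc j)} * f 0 \<le> f m"
proof (induction m)
  case 0 then show ?case by simp
next
  case (Suc m)
  then have IH: "2 ^ card {j. j < m \<and> 2 * f j < f (Suc j)} * f 0 \<le> f m" by auto
  have mono: "f m \<le> f (Suc m)" using Suc.prems by auto
  show ?case
  proof (cases "2 * f m < f (Suc m)")
    case True
    then have "{j. j < Suc m \<and> 2 * f j < f (Suc j)} = insert m {j. j < m \<and> 2 * f j < f (Suc j)}" by auto
    then have "card {j. j < Suc m \<and> 2 * f j < f (Suc j)} = Suc (card {j. j < m \<and> 2 * f j < f (Suc j)})" by simp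
    then show ?thesis using IH True by simp
  next
    case False
    then have "{j. j < Suc m \<and> 2 * f j < f (Suc j)} = {j. j < m \<and> 2 * f j < f (Suc j)}" using less_Suc_eq by auto
    then show ?thesis using IH mono by simp
  qed
qed

lemma union_bound:
  assumes "finite I" "\<And>i. i \<in> I \<Longrightarrow> finite (F i)" "\<And>i. i \<in> I \<Longrightarrow> real (card (F i)) \<le> b"
  shows "real (card (\<Union>i\<in>I. F i)) \<le> real (card I) * b" "finite (\<Union>i\<in>I. F i)"
proof -
  have "card (\<Union>i\<in>I. F i) \<le> (\<Sum>i\<in>I. card (F i))" by (rule card_UN_le[OF assms(1)])
  then have "real (card (\<Union>i\<in>I. F i)) \<le> (\<Sum>i\<in>I. real (card (F i)))" by (metis of_nat_le_iff of_nat_sum)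
  also have "\<dots> \<le> (\<Sum>i\<in>I. b)" using assms(3) by (intro sum_mono) auto
  finally show "real (card (\<Union>i\<in>I. F i)) \<le> real (card I) * b" by simp
  show "finite (\<Union>i\<in>I. F i)" using assms(1,2) by blast
qed

locale bt =
  fixes V :: "'a set" and E s par
  assumes G: "graph V E" and CG: "connected_graph V E" and BFS: "bfs_tree V E s par"
begin

abbreviation d where "d \<equiv> gdist E s"

lemma finV: "finite V" using G unfolding graph_def by auto
lemma sV: "s \<in> V" using BFS unfolding bfs_tree_def by auto

lemma par_props: "v \<in> V \<Longrightarrow> v \<noteq> s \<Longrightarrow> par v \<in> V \<and> {v, par v} \<in> E \<and> d v = Suc (d (par v))"
  using BFS unfolding bfs_tree_def by auto

lemma d_s: "d s = 0"
proof -
  have "walk E [s]" unfolding walk_def by auto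
  then show ?thesis unfolding gdist_def
    by (intro Least_eq_0 exI[of _ "[s]"]) simp
qed

lemma d0: "v \<in> V \<Longrightarrow> d v = 0 \<Longrightarrow> v = s"
proof -
  assume v: "v \<in> V" and z: "d v = 0"
  obtain p where p: "walk E p" "hd p = s" "last p = v" "set p \<subseteq> V"
    using CG v sV unfolding connected_graph_def conn_in_def by blast
  have ex: "\<exists>n p. walk E p \<and> hd p = s \<and> last p = v \<and> length p = Suc n"
  proof -
    have "p \<noteq> []" using p(1) unfolding walk_def by simp
    then obtain n where "length p = Suc n" by (cases p) auto
    then show ?thesis using p by blast
  qed
  from LeastI_ex[OF ex] obtain q where "walk E q" "hd q = s" "last q = v" "length q = Suc (d v)"
    unfolding gdist_def by blast
  moreover then obtain a where "q = [a]" using z by (auto simp: length_Suc_conv)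
  ultimately show "v = s" by simp
qed

lemma funpow_props: "v \<in> V \<Longrightarrow> i \<le> d v \<Longrightarrow> (par ^^ i) v \<in> V \<and> d ((par ^^ i) v) = d v - i"
proof (induction i)
  case 0 then show ?case by simp
next
  case (Suc i)
  then have w: "(par ^^ i) v \<in> V" "d ((par ^^ i) v) = d v - i" by auto
  have "(par ^^ i) v \<noteq> s" using w Suc.prems d_s by auto
  then show ?case using par_props[OF w(1)] w by auto
qed

lemma funpow_top: "v \<in> V \<Longrightarrow> (par ^^ d v) v = s"
  using funpow_props[of v "d v"] d0 by auto

lemma d_le_D: "v \<in> V \<Longrightarrow> d v \<le> diameter V E"
proof -
  assume v: "v \<in> V"
  have "finite {gdist E u w | u w. u \<in> V \<and> w \<in> V}"
  proof -
    have "{gdist E u w | u w. u \<in> V \<and> w \<in> V} = (\<lambda>(u,w). gdist E u w) ` (V \<times> V)" by auto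
    then show ?thesis using finV by simp
  qed
  then show ?thesis unfolding diameter_def using v sV by (intro Max_ge) auto
qed

lemma set_rootpath: "set (rootpath E s par v) = {(par ^^ i) v | i. i \<le> d v}"
proof -
  have "set (rootpath E s par v) = (\<lambda>i. (par ^^ i) v) ` {..d v}"
    unfolding rootpath_def by (simp only: set_map set_upt atLeast0LessThan lessThan_Suc_atMost)
  then show ?thesis by blast
qed

lemma length_rootpath: "length (rootpath E s par v) = Suc (d v)"
  unfolding rootpath_def by simp

lemma tanc_iff: "tanc E s par x v \<longleftrightarrow> (\<exists>i\<le>d v. x = (par ^^ i) v)"
  unfolding tanc_def set_rootpath by auto

lemma tanc_idx: "v \<in> V \<Longrightarrow> tanc E s par x v \<Longrightarrow> x \<in> V \<and> d x \<le> d v \<and> x = (par ^^ (d v - d x)) v"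
proof -
  assume v: "v \<in> V" and t: "tanc E s par x v"
  then obtain i where i: "i \<le> d v" "x = (par ^^ i) v" using tanc_iff by auto
  then have "x \<in> V" "d x = d v - i" using funpow_props[OF v i(1)] by auto
  moreover have "d v - (d v - i) = i" using i by simp
  ultimately show ?thesis using i by simp
qed

lemma tanc_refl: "tanc E s par v v"
  unfolding tanc_iff by (metis funpow_0 le0)

lemma tanc_s: "v \<in> V \<Longrightarrow> tanc E s par s v"
  unfolding tanc_iff using funpow_top by (metis order_refl)

lemma tanc_trans: "v \<in> V \<Longrightarrow> tanc E s par x v \<Longrightarrow> tanc E s par y x \<Longrightarrow> tanc E s par y v"
proof -
  assume v: "v \<in> V" and a: "tanc E s par x v" and b: "tanc E s par y x"
  obtain i where i: "i \<le> d v" "x = (par ^^ i) v" using a tanc_iff by auto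
  have x: "x \<in> V" "d x = d v - i" using funpow_props[OF v i(1)] i by auto
  obtain j where j: "j \<le> d x" "y = (par ^^ j) x" using b tanc_iff by auto
  have "y = (par ^^ (j + i)) v" using i j by (simp add: funpow_add)
  moreover have "j + i \<le> d v" using j x i by auto
  ultimately show ?thesis unfolding tanc_iff by blast
qed

lemma rootpath_sub: "v \<in> V \<Longrightarrow> tanc E s par x v \<Longrightarrow> set (rootpath E s par x) \<subseteq> set (rootpath E s par v)"
  using tanc_trans unfolding tanc_def by blast

lemma lca_anc: assumes v: "v \<in> V" and a: "tanc E s par x v"
  shows "lca E s par x v = x" "lca E s par v x = x"
proof -
  have x: "x \<in> V" "d x \<le> d v" using tanc_idx[OF v a] by auto
  have I: "set (rootpath E s par x) \<inter> set (rootpath E s par v) = set (rootpath E s par x)"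
    using rootpath_sub[OF v a] by auto
  have P: "(w \<in> set (rootpath E s par x) \<and> (\<forall>w' \<in> set (rootpath E s par x). d w' \<le> d w)) \<longleftrightarrow> w = x" for w
  proof
    assume h: "w \<in> set (rootpath E s par x) \<and> (\<forall>w' \<in> set (rootpath E s par x). d w' \<le> d w)"
    then have "d x \<le> d w" using tanc_refl unfolding tanc_def by auto
    moreover obtain j where "j \<le> d x" "w = (par ^^ j) x" using h set_rootpath by auto
    moreover have "d w = d x - j" using funpow_props[OF x(1)] \<open>j \<le> d x\<close> \<open>w = (par ^^ j) x\<close> by auto
    ultimately have "j = 0" using \<open>j \<le> d x\<close> by linarith
    then show "w = x" using \<open>w = (par ^^ j) x\<close> by simp
  next
    assume "w = x"
    then show "w \<in> set (rootpath E s par x) \<and> (\<forall>w' \<in> set (rootpath E s par x). d w' \<le> d w)"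
      using tanc_refl tanc_idx[OF x(1)] unfolding tanc_def by auto
  qed
  show "lca E s par x v = x" unfolding lca_def I by (rule the_equality) (use P in blast)+
  have I2: "set (rootpath E s par v) \<inter> set (rootpath E s par x) = set (rootpath E s par x)" using I by auto
  show "lca E s par v x = x" unfolding lca_def I2 by (rule the_equality) (use P in blast)+
qed

lemma take_rootpath: "m \<le> d v \<Longrightarrow> take (Suc m) (rootpath E s par v) = map (\<lambda>i. (par ^^ i) v) [0..<Suc m]"
  unfolding rootpath_def by (simp del: upt_Suc add: take_map take_upt)

lemma tpath_down: assumes v: "v \<in> V" and a: "tanc E s par x v"
  shows "tpath E s par x v = rev (map (\<lambda>i. (par ^^ i) v) [0..<Suc (d v - d x)])"
proof -
  have x: "x \<in> V" "d x \<le> d v" "x = (par ^^ (d v - d x)) v" using tanc_idx[OF v a] by auto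
  have t1: "take (d x - d x + 1) (rootpath E s par x) = [x]"
    using take_rootpath[of 0 x] by simp
  have t2: "take (d v - d x + 1) (rootpath E s par v) = map (\<lambda>i. (par ^^ i) v) [0..<Suc (d v - d x)]"
    using take_rootpath[of "d v - d x" v] by simp
  have r: "rev (map (\<lambda>i. (par ^^ i) v) [0..<Suc (d v - d x)]) = x # rev (map (\<lambda>i. (par ^^ i) v) [0..<d v - d x])"
    using x(3) by simp
  show ?thesis unfolding tpath_def Let_def lca_anc(1)[OF v a] t1 t2 r by simp
qed

lemma tpath_up: assumes u: "u \<in> V" and a: "tanc E s par y u"
  shows "tpath E s par u y = map (\<lambda>i. (par ^^ i) u) [0..<Suc (d u - d y)]"
proof -
  have t1: "take (d y - d y + 1) (rootpath E s par y) = [y]"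
    using take_rootpath[of 0 y] by simp
  have t2: "take (d u - d y + 1) (rootpath E s par u) = map (\<lambda>i. (par ^^ i) u) [0..<Suc (d u - d y)]"
    using take_rootpath[of "d u - d y" u] tanc_idx[OF u a] by simp
  show ?thesis unfolding tpath_def Let_def lca_anc(2)[OF u a] t1 t2 by simp
qed

lemma tpath_len: "length (tpath E s par u v) \<le> Suc (d u) + d v"
  unfolding tpath_def Let_def by (simp add: length_rootpath)

lemma edges_map_upt: "edges_of (map f [0..<Suc m]) = {{f i, f (Suc i)} | i. i < m}"
proof -
  have n: "\<And>i. i < Suc m \<Longrightarrow> map f [0..<Suc m] ! i = f i" by (simp del: upt_Suc)
  show ?thesis unfolding edges_of_def
  proof (rule set_eqI, rule iffI)
    fix e assume "e \<in> {{map f [0..<Suc m] ! i, map f [0..<Suc m] ! Suc i} |i. Suc i < length (map f [0..<Suc m])}"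
    then obtain i where "Suc i < Suc m" "e = {map f [0..<Suc m] ! i, map f [0..<Suc m] ! Suc i}" by auto
    then show "e \<in> {{f i, f (Suc i)} |i. i < m}" using n by auto
  next
    fix e assume "e \<in> {{f i, f (Suc i)} |i. i < m}"
    then obtain i where i: "i < m" "e = {f i, f (Suc i)}" by auto
    then have "e = {map f [0..<Suc m] ! i, map f [0..<Suc m] ! Suc i}" "Suc i < length (map f [0..<Suc m])"
      using n by auto
    then show "e \<in> {{map f [0..<Suc m] ! i, map f [0..<Suc m] ! Suc i} |i. Suc i < length (map f [0..<Suc m])}" by blast
  qed
qed

lemma edges_rev: "edges_of (rev xs) = edges_of xs"
proof -
  have 1: "edges_of (rev xs) \<subseteq> edges_of xs" for xs :: "'b list"
  proof
    fix e assume "e \<in> edges_of (rev xs)"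
    then obtain i where i: "Suc i < length xs" "e = {rev xs ! i, rev xs ! Suc i}" unfolding edges_of_def by auto
    define j where "j = length xs - Suc (Suc i)"
    have "Suc j < length xs" "rev xs ! i = xs ! Suc j" "rev xs ! Suc i = xs ! j"
      using i unfolding j_def by (auto simp: rev_nth Suc_diff_Suc)
    then show "e \<in> edges_of xs" unfolding edges_of_def using i by (auto simp: insert_commute)
  qed
  show ?thesis using 1[of xs] 1[of "rev xs"] by simp
qed

lemma edges_append_sub: "edges_of xs \<subseteq> edges_of (xs @ ys)"
  unfolding edges_of_def by (force simp: nth_append)

lemma edges_append: assumes "e \<in> edges_of (xs @ ys)" "xs \<noteq> []" "ys \<noteq> []"
  shows "e \<in> edges_of xs \<or> e \<in> edges_of ys \<or> e = {last xs, hd ys}"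
proof -
  obtain i where i: "Suc i < length xs + length ys" "e = {(xs @ ys) ! i, (xs @ ys) ! Suc i}"
    using assms(1) unfolding edges_of_def by auto
  consider "Suc i < length xs" | "Suc i = length xs" | "length xs \<le> i" by linarith
  then show ?thesis
  proof cases
    case 1 then show ?thesis using i unfolding edges_of_def by (auto simp: nth_append)
  next
    case 2
    then have "i = length xs - 1" by simp
    then have "e = {last xs, hd ys}" using i 2 assms(2,3) by (auto simp: nth_append last_conv_nth hd_conv_nth)
    then show ?thesis by simp
  next
    case 3
    then have "Suc (i - length xs) < length ys" "(xs @ ys) ! i = ys ! (i - length xs)"
      "(xs @ ys) ! Suc i = ys ! Suc (i - length xs)" using i by (auto simp: nth_append Suc_diff_le)
    then show ?thesis using i unfolding edges_of_def by auto
  qed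
qed

lemma walk_rev: "walk E p \<Longrightarrow> walk E (rev p)"
proof -
  assume w: "walk E p"
  have "rev p \<noteq> []" using w unfolding walk_def by simp
  moreover have "{rev p ! i, rev p ! Suc i} \<in> E" if "Suc i < length p" for i
  proof -
    have "{rev p ! i, rev p ! Suc i} \<in> edges_of (rev p)" unfolding edges_of_def using that by auto
    then have "{rev p ! i, rev p ! Suc i} \<in> edges_of p" using edges_rev by blast
    then show ?thesis using w unfolding edges_of_def walk_def by auto
  qed
  ultimately show ?thesis unfolding walk_def by simp
qed

lemma walk_append: "walk E p \<Longrightarrow> walk E q \<Longrightarrow> {last p, hd q} \<in> E \<Longrightarrow> walk E (p @ q)"
proof -
  assume p: "walk E p" and q: "walk E q" and e: "{last p, hd q} \<in> E"
  have "p @ q \<noteq> []" using p unfolding walk_def by simp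
  moreover have "{(p @ q) ! i, (p @ q) ! Suc i} \<in> E" if "Suc i < length (p @ q)" for i
  proof -
    have ee: "{(p @ q) ! i, (p @ q) ! Suc i} \<in> edges_of (p @ q)" unfolding edges_of_def using that by auto
    have "p \<noteq> []" "q \<noteq> []" using p q unfolding walk_def by auto
    from edges_append[OF ee this] show ?thesis using p q e unfolding walk_def edges_of_def by auto
  qed
  ultimately show ?thesis unfolding walk_def by simp
qed

lemma conn_sym: "conn_in E S u v \<Longrightarrow> conn_in E S v u"
  unfolding conn_in_def using walk_rev
  by (metis hd_rev last_rev set_rev)

lemma conn_trans: assumes "conn_in E S u v" "conn_in E S v w" shows "conn_in E S u w"
proof -
  obtain p where p: "walk E p" "hd p = u" "last p = v" "set p \<subseteq> S" using assms(1) unfolding conn_in_def by blast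
  obtain q where q: "walk E q" "hd q = v" "last q = w" "set q \<subseteq> S" using assms(2) unfolding conn_in_def by blast
  show ?thesis
  proof (cases "tl q = []")
    case True
    then have "q = [v]" using q by (cases q) (auto simp: walk_def)
    then show ?thesis using p q unfolding conn_in_def by auto
  next
    case False
    then obtain a b r where qq: "q = a # b # r" using q(1) unfolding walk_def by (cases q; cases "tl q") auto
    have "walk E (b # r)" using q(1) unfolding walk_def qq by auto
    moreover have "{last p, hd (b # r)} \<in> E" using q(1) p(3) q(2) unfolding walk_def qq by fastforce
    ultimately have "walk E (p @ b # r)" using walk_append p(1) by blast
    moreover have "p \<noteq> []" using p(1) unfolding walk_def by simp
    ultimately show ?thesis unfolding conn_in_def using p q qq by (intro exI[of _ "p @ b # r"]) auto
  qed
qed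

lemma conn_edge: "u \<in> S \<Longrightarrow> w \<in> S \<Longrightarrow> {u, w} \<in> E \<Longrightarrow> conn_in E S u w"
  unfolding conn_in_def by (intro exI[of _ "[u, w]"]) (auto simp: walk_def less_Suc_eq)

lemma comp_eq: "conn_in E S a b \<Longrightarrow> {w. conn_in E S a w} = {w. conn_in E S b w}"
  using conn_sym conn_trans by blast

lemma finite_subtree: "finite (subtree V E s par x)"
  unfolding subtree_def using finV by simp

lemma tanc_par: "v \<in> V \<Longrightarrow> v \<noteq> s \<Longrightarrow> tanc E s par (par v) v"
proof -
  assume "v \<in> V" "v \<noteq> s"
  then have "d v \<noteq> 0" using d0 by blast
  then show ?thesis unfolding tanc_iff by (intro exI[of _ 1]) simp
qed

lemma subtree_mono: assumes u: "u \<in> V" and j: "j < d u"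
  shows "subtree V E s par ((par ^^ j) u) \<subseteq> subtree V E s par ((par ^^ Suc j) u)"
proof -
  have w: "(par ^^ j) u \<in> V" "d ((par ^^ j) u) = d u - j" using funpow_props[OF u] j by auto
  then have "(par ^^ j) u \<noteq> s" using j d_s by auto
  then have "tanc E s par ((par ^^ Suc j) u) ((par ^^ j) u)" using tanc_par[OF w(1)] by simp
  then show ?thesis unfolding subtree_def using tanc_trans by blast
qed

definition LT where
  "LT u = {(par ^^ Suc j) u | j. Suc j < d u \<and>
      2 * card (subtree V E s par ((par ^^ j) u)) < card (subtree V E s par ((par ^^ Suc j) u))}"

lemma LT_finite: "finite (LT u)"
proof -
  have "LT u \<subseteq> (\<lambda>j. (par ^^ Suc j) u) ` {..<d u}" unfolding LT_def by auto
  then show ?thesis using finite_subset by blast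
qed

lemma LT_card: assumes u: "u \<in> V" shows "real (card (LT u)) \<le> log 2 (real (card V))"
proof -
  define f where "f j = card (subtree V E s par ((par ^^ j) u))" for j
  define J where "J = {j. j < d u \<and> 2 * f j < f (Suc j)}"
  have "LT u \<subseteq> (\<lambda>j. (par ^^ Suc j) u) ` J" unfolding LT_def J_def f_def by auto
  moreover have fJ: "finite J" unfolding J_def by simp
  ultimately have "card (LT u) \<le> card ((\<lambda>j. (par ^^ Suc j) u) ` J)" by (intro card_mono) auto
  also have "\<dots> \<le> card J" using fJ by (rule card_image_le)
  finally have c1: "card (LT u) \<le> card J" .
  have "\<forall>j<d u. f j \<le> f (Suc j)" unfolding f_def using subtree_mono[OF u] finite_subtree by (simp add: card_mono)
  from double_count[OF this] have c2: "2 ^ card J * f 0 \<le> f (d u)" unfolding J_def .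
  have "u \<in> subtree V E s par u" unfolding subtree_def using u tanc_refl by simp
  then have "f 0 \<ge> 1" unfolding f_def using finite_subtree[of u]
    by (metis One_nat_def Suc_leI card_gt_0_iff empty_iff funpow_0)
  moreover have "f (d u) \<le> card V" unfolding f_def subtree_def using finV by (simp add: card_mono)
  moreover have "(2::nat) ^ card J \<le> 2 ^ card J * f 0" using \<open>f 0 \<ge> 1\<close> by simp
  ultimately have "2 ^ card J \<le> card V" using c2 by linarith
  then have "real (card J) \<le> log 2 (real (card V))" by (rule le_log2_of_power)
  then show ?thesis using c1 by linarith
qed

lemma light_child:
  assumes H: "heavy_child_fun V E s par h" and y: "y \<in> V" and c: "c \<in> children V s par y" and ne: "c \<noteq> h y"
  shows "2 * card (subtree V E s par c) < card (subtree V E s par y)"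
proof -
  have hy: "h y \<in> children V s par y" "card (subtree V E s par c) \<le> card (subtree V E s par (h y))"
    using H y c unfolding heavy_child_fun_def by blast+
  have ch: "z \<in> V" "z \<noteq> s" "par z = y" "d z = Suc (d y)" if "z \<in> children V s par y" for z
    using that par_props unfolding children_def by auto
  have sub: "subtree V E s par z \<subseteq> subtree V E s par y - {y}" if "z \<in> children V s par y" for z
  proof
    fix w assume w: "w \<in> subtree V E s par z"
    then have wV: "w \<in> V" "tanc E s par z w" unfolding subtree_def by auto
    have "tanc E s par y z" using tanc_par[of z] ch[OF that] by simp
    then have "tanc E s par y w" using tanc_trans wV by blast
    moreover have "w \<noteq> y"
    proof
      assume "w = y"
      then have "d z \<le> d y" using tanc_idx wV by blast
      then show False using ch[OF that] by simp
    qed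
    ultimately show "w \<in> subtree V E s par y - {y}" using wV unfolding subtree_def by auto
  qed
  have disj: "subtree V E s par c \<inter> subtree V E s par (h y) = {}"
  proof (rule ccontr)
    assume "subtree V E s par c \<inter> subtree V E s par (h y) \<noteq> {}"
    then obtain w where w: "w \<in> V" "tanc E s par c w" "tanc E s par (h y) w" unfolding subtree_def by auto
    have "c = (par ^^ (d w - d c)) w" "h y = (par ^^ (d w - d (h y))) w" using tanc_idx w by blast+
    moreover have "d c = d (h y)" using ch c hy(1) by simp
    ultimately show False using ne by simp
  qed
  have "card (subtree V E s par c) + card (subtree V E s par (h y)) = card (subtree V E s par c \<union> subtree V E s par (h y))"
    using disj finite_subtree by (simp add: card_Un_disjoint)
  also have "\<dots> \<le> card (subtree V E s par y - {y})"
    using sub[OF c] sub[OF hy(1)] finite_subtree by (intro card_mono) auto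
  also have "\<dots> < card (subtree V E s par y)"
    using y tanc_refl finite_subtree unfolding subtree_def by (intro psubset_card_mono) auto
  finally show ?thesis using hy(2) by linarith
qed

lemma conn_refl: "u \<in> S \<Longrightarrow> conn_in E S u u"
  unfolding conn_in_def by (intro exI[of _ "[u]"]) (auto simp: walk_def)

lemma in_strict: assumes v: "v \<in> V" and a: "tanc E s par x v" and j: "j < d v - d x"
  shows "(par ^^ j) v \<in> strict_subtree V E s par x" "d ((par ^^ j) v) = d v - j"
proof -
  have x: "x \<in> V" "d x \<le> d v" "x = (par ^^ (d v - d x)) v" using tanc_idx[OF v a] by auto
  have w: "(par ^^ j) v \<in> V" "d ((par ^^ j) v) = d v - j" using funpow_props[OF v] j by auto
  then show "d ((par ^^ j) v) = d v - j" by simp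
  have "(par ^^ (d v - d x)) v = (par ^^ (d v - d x - j)) ((par ^^ j) v)"
    using j by (metis funpow_add le_add_diff_inverse2 less_imp_le_nat comp_apply)
  then have "tanc E s par x ((par ^^ j) v)" unfolding tanc_iff using x(3) w(2) j
    by (intro exI[of _ "d v - d x - j"]) auto
  moreover have "(par ^^ j) v \<noteq> x" using w(2) j by auto
  ultimately show "(par ^^ j) v \<in> strict_subtree V E s par x"
    unfolding strict_subtree_def subtree_def using w by auto
qed

lemma conn_up: assumes v: "v \<in> V" and a: "tanc E s par x v"
  shows "i < d v - d x \<Longrightarrow> conn_in E (strict_subtree V E s par x) v ((par ^^ i) v)"
proof (induction i)
  case 0 then show ?case using in_strict[OF v a, of 0] conn_refl by simp
next
  case (Suc i)
  have w: "(par ^^ i) v \<in> strict_subtree V E s par x" "d ((par ^^ i) v) = d v - i"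
    using in_strict[OF v a, of i] Suc.prems by auto
  have "(par ^^ i) v \<in> V" "(par ^^ i) v \<noteq> s" using w Suc.prems d_s
    unfolding strict_subtree_def subtree_def by auto
  then have "{(par ^^ i) v, (par ^^ Suc i) v} \<in> E" using par_props by simp
  moreover have "(par ^^ Suc i) v \<in> strict_subtree V E s par x" using in_strict[OF v a] Suc.prems by blast
  ultimately have "conn_in E (strict_subtree V E s par x) ((par ^^ i) v) ((par ^^ Suc i) v)"
    using w(1) conn_edge by blast
  then show ?case using Suc conn_trans by simp
qed

end

locale bt2 = bt V E s par for V :: "'a set" and E s par +
  fixes h uC vC Csel
  assumes H: "heavy_child_fun V E s par h" and CE: "comp_edges V E s par uC vC"
    and LC: "light_choice V E s par h uC vC Csel"
begin

lemma comp_in: "w \<in> strict_subtree V E s par x \<Longrightarrow> comp_of V E s par x w \<in> comps V E s par x"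
  unfolding comps_def by blast

lemma comp_vert: "C \<in> comps V E s par x \<Longrightarrow> z \<in> C \<Longrightarrow> z \<in> strict_subtree V E s par x \<and> C = comp_of V E s par x z"
proof -
  assume C: "C \<in> comps V E s par x" and z: "z \<in> C"
  then obtain w where w: "C = comp_of V E s par x w" unfolding comps_def by blast
  then have cz: "conn_in E (strict_subtree V E s par x) w z" using z unfolding comp_of_def by simp
  then obtain p where "walk E p" "last p = z" "set p \<subseteq> strict_subtree V E s par x" unfolding conn_in_def by blast
  then have "z \<in> strict_subtree V E s par x" using last_in_set unfolding walk_def by blast
  moreover have "C = comp_of V E s par x z" using w comp_eq[OF cz] unfolding comp_of_def by simp
  ultimately show ?thesis by simp
qed

lemma uC_V: "x \<in> V \<Longrightarrow> x \<noteq> s \<Longrightarrow> w \<in> strict_subtree V E s par x \<Longrightarrow> uC x (comp_of V E s par x w) \<in> V"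
  using CE comp_in unfolding comp_edges_def by blast

lemma piC_len: assumes "x \<in> V" "x \<noteq> s" "w \<in> strict_subtree V E s par x"
  shows "length (piC E s par uC vC x (comp_of V E s par x w)) \<le> diameter V E + 2"
proof -
  have "length (piC E s par uC vC x (comp_of V E s par x w)) \<le> Suc (d s) + d (uC x (comp_of V E s par x w)) + 1"
    unfolding piC_def using tpath_len by simp
  then show ?thesis using d_le_D[OF uC_V[OF assms]] d_s by simp
qed

lemma olp_struct:
  assumes olp: "ordered_light_pair V E s par h uC vC x y"
  defines "C \<equiv> Csel x y"
  defines "u \<equiv> uC x C" and "v \<equiv> vC x C"
  shows "x \<in> V" "y \<in> V" "x \<noteq> s" "y \<noteq> s" "u \<in> V" "v \<in> strict_subtree V E s par x"
    "C = comp_of V E s par x v" "tanc E s par x v" "tanc E s par y u" "v \<in> V"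
    "light_path E s par uC vC Csel x y =
       rev (map (\<lambda>i. (par ^^ i) v) [0..<Suc (d v - d x)]) @ map (\<lambda>i. (par ^^ i) u) [0..<Suc (d u - d y)]"
    "y \<noteq> u \<Longrightarrow> 2 * card (subtree V E s par ((par ^^ (d u - d y - 1)) u)) < card (subtree V E s par y)"
    "y \<noteq> u \<Longrightarrow> x \<in> set (piC E s par uC vC y (comp_of V E s par y ((par ^^ (d u - d y - 1)) u)))"
proof -
  have xy: "x \<in> V" "y \<in> V" "independent E s par x y" using olp unfolding ordered_light_pair_def by auto
  have fs: "fully_sensitive V E s par uC vC x y C" "\<not> heavy_edge_on V s par h y (piC E s par uC vC x C)"
    using LC olp unfolding light_choice_def C_def by auto
  show "x \<in> V" "y \<in> V" by (fact xy(1), fact xy(2))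
  show xs: "x \<noteq> s" using xy tanc_s unfolding independent_def by blast
  show ys: "y \<noteq> s" using xy tanc_s unfolding independent_def by blast
  have Cc: "C \<in> comps V E s par x" using fs(1) unfolding fully_sensitive_def by simp
  have ce: "{u, v} \<in> E" "v \<in> C" "u \<in> V - subtree V E s par x"
    using CE Cc xy(1) xs unfolding comp_edges_def u_def v_def by blast+
  show uV: "u \<in> V" using ce by simp
  show vS: "v \<in> strict_subtree V E s par x" "C = comp_of V E s par x v" using comp_vert[OF Cc ce(2)] by auto
  then show txv: "tanc E s par x v" and vV: "v \<in> V" unfolding strict_subtree_def subtree_def by auto
  have piC: "piC E s par uC vC x C = rev (map (\<lambda>i. (par ^^ i) u) [0..<Suc (d u)]) @ [v]"
    unfolding piC_def u_def[symmetric] v_def[symmetric] using tpath_down[OF uV tanc_s[OF uV]] d_s by simp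
  have "y \<in> set (piC E s par uC vC x C)" using fs(1) unfolding fully_sensitive_def by simp
  moreover have "y \<noteq> v" using txv xy(3) unfolding independent_def by blast
  ultimately have "y \<in> set (map (\<lambda>i. (par ^^ i) u) [0..<Suc (d u)])" unfolding piC by simp
  then show tyu: "tanc E s par y u" unfolding tanc_def rootpath_def by simp
  show "light_path E s par uC vC Csel x y =
       rev (map (\<lambda>i. (par ^^ i) v) [0..<Suc (d v - d x)]) @ map (\<lambda>i. (par ^^ i) u) [0..<Suc (d u - d y)]"
    unfolding light_path_def Let_def C_def[symmetric] u_def[symmetric] v_def[symmetric]
    using tpath_down[OF vV txv] tpath_up[OF uV tyu] by simp
  have yi: "d y \<le> d u" "y = (par ^^ (d u - d y)) u" using tanc_idx[OF uV tyu] by auto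
  assume yu: "y \<noteq> u"
  define m where "m = d u - d y"
  have m0: "m > 0" using yu yi unfolding m_def by (metis funpow_0 gr0I)
  define y' where "y' = (par ^^ (m - 1)) u"
  have y': "y' \<in> V" "d y' = d u - (m - 1)" using funpow_props[OF uV, of "m - 1"] yi unfolding y'_def m_def by auto
  have "par y' = (par ^^ Suc (m - 1)) u" unfolding y'_def by simp
  moreover have "Suc (m - 1) = m" using m0 by simp
  ultimately have py': "par y' = y" using yi unfolding m_def by metis
  have "y' \<noteq> s" using y' d_s m0 yi unfolding m_def by auto
  then have ych: "y' \<in> children V s par y" unfolding children_def using y' py' by auto
  have "{(par ^^ (m - 1)) u, (par ^^ Suc (m - 1)) u} \<in> edges_of (map (\<lambda>i. (par ^^ i) u) [0..<Suc (d u)])"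
  proof -
    have "m - 1 < d u" using m0 yi unfolding m_def by simp
    then show ?thesis unfolding edges_map_upt by blast
  qed
  then have "{y, y'} \<in> edges_of (piC E s par uC vC x C)"
    unfolding piC using edges_rev edges_append_sub py' y'_def
    by (metis (no_types, lifting) \<open>par y' = (par ^^ Suc (m - 1)) u\<close> insert_commute subsetD)
  then have "h y \<noteq> y'" using fs(2) ych unfolding heavy_edge_on_def by auto
  from light_child[OF H xy(2) ych this[symmetric]]
  show "2 * card (subtree V E s par ((par ^^ (d u - d y - 1)) u)) < card (subtree V E s par y)"
    unfolding y'_def m_def .
  have "x \<in> set (piC E s par uC vC y (comp_of V E s par y y'))"
    using fs(1) ych \<open>{y, y'} \<in> edges_of (piC E s par uC vC x C)\<close> unfolding fully_sensitive_def by blast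
  then show "x \<in> set (piC E s par uC vC y (comp_of V E s par y ((par ^^ (d u - d y - 1)) u)))"
    unfolding y'_def m_def .
qed

lemma fp: "(par ^^ j) ((par ^^ i) w) = (par ^^ (j + i)) w"
  by (simp add: funpow_add)

lemma y_in_L:
  assumes olp: "ordered_light_pair V E s par h uC vC x y"
  shows "y \<in> insert (uC x (Csel x y)) (LT (uC x (Csel x y)))"
proof (cases "y = uC x (Csel x y)")
  case True then show ?thesis by simp
next
  case False
  define u where "u = uC x (Csel x y)"
  have yu: "y \<noteq> u" using False u_def by simp
  note st = olp_struct[OF olp, folded u_def]
  have yi: "d y \<le> d u" "y = (par ^^ (d u - d y)) u" using tanc_idx[OF st(5) st(9)] by auto
  define m where "m = d u - d y"
  have m0: "m > 0" using yu yi unfolding m_def by (metis funpow_0 gr0I)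
  have "d y \<noteq> 0" using d0 st(2,4) by blast
  then have mlt: "m < d u" using m0 by (simp add: m_def)
  have "Suc (m - 1) = m" using m0 by simp
  then have "y = (par ^^ Suc (m - 1)) u" using yi unfolding m_def by simp
  moreover have "2 * card (subtree V E s par ((par ^^ (m - 1)) u)) < card (subtree V E s par y)"
    using st(12)[OF yu] unfolding m_def .
  ultimately have "y \<in> LT u" unfolding LT_def using mlt \<open>Suc (m - 1) = m\<close>
    by (intro CollectI exI[of _ "m - 1"]) auto
  then show ?thesis unfolding u_def by simp
qed

definition AX where
  "AX a = {x \<in> set (rootpath E s par a). x \<in> V \<and> x \<noteq> s \<and> a \<in> strict_subtree V E s par x}"

definition FA where "FA a x = Pair x ` insert (uC x (comp_of V E s par x a)) (LT (uC x (comp_of V E s par x a)))"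
definition FB where "FB a y = (\<lambda>x. (x, y)) ` set (piC E s par uC vC y (comp_of V E s par y ((par ^^ (d a - d y - 1)) a)))"
definition GA where "GA a = (\<Union>x\<in>AX a. FA a x)"
definition GB where "GB a = (\<Union>y\<in>LT a. FB a y)"
definition SetA where "SetA e = (\<Union>a\<in>e \<inter> V. GA a)"
definition SetB where "SetB e = (\<Union>a\<in>e \<inter> V. GB a)"

lemma cover:
  assumes olp: "ordered_light_pair V E s par h uC vC x y"
    and e: "e \<in> edges_of (light_path E s par uC vC Csel x y)"
  shows "(x, y) \<in> SetA e \<union> SetB e"
proof -
  define C where "C = Csel x y"
  define u where "u = uC x C"
  define v where "v = vC x C"
  note st = olp_struct[OF olp, folded C_def, folded u_def v_def]
  define f where "f i = (par ^^ i) v" for i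
  define g where "g i = (par ^^ i) u" for i
  have LP: "light_path E s par uC vC Csel x y = rev (map f [0..<Suc (d v - d x)]) @ map g [0..<Suc (d u - d y)]"
    using st(11) unfolding f_def g_def .
  have yL: "y \<in> insert u (LT u)" using y_in_L[OF olp] unfolding u_def C_def .
  have caseA: "(x, y) \<in> SetA e" if a: "a \<in> e" "a \<in> strict_subtree V E s par x" "C = comp_of V E s par x a" for a
  proof -
    have aV: "a \<in> V" "tanc E s par x a" using a(2) unfolding strict_subtree_def subtree_def by auto
    have "x \<in> AX a" unfolding AX_def using aV a(2) st(1,3) unfolding tanc_def by auto
    moreover have "y \<in> insert (uC x (comp_of V E s par x a)) (LT (uC x (comp_of V E s par x a)))"
      using yL a(3) unfolding u_def by simp
    ultimately show ?thesis unfolding SetA_def GA_def FA_def using a(1) aV(1) by blast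
  qed
  have ne: "rev (map f [0..<Suc (d v - d x)]) \<noteq> []" "map g [0..<Suc (d u - d y)] \<noteq> []" by simp_all
  from edges_append[OF e[unfolded LP] ne]
  consider "e \<in> edges_of (map f [0..<Suc (d v - d x)])" | "e \<in> edges_of (map g [0..<Suc (d u - d y)])"
    | "e = {v, u}"
    using edges_rev by (auto simp del: upt_Suc simp: f_def g_def last_rev hd_map)
  then show ?thesis
  proof cases
    case 1
    then obtain i where i: "i < d v - d x" "e = {f i, f (Suc i)}" unfolding edges_map_upt by blast
    have "f i \<in> strict_subtree V E s par x" unfolding f_def using in_strict[OF st(10) st(8) i(1)] by simp
    moreover have "C = comp_of V E s par x (f i)"
      using st(7) comp_eq[OF conn_up[OF st(10) st(8) i(1)]] unfolding comp_of_def f_def by simp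
    ultimately show ?thesis using caseA[of "f i"] i(2) by blast
  next
    case 3
    then show ?thesis using caseA[of v] st(6,7) by blast
  next
    case 2
    then obtain i where i: "i < d u - d y" "e = {g i, g (Suc i)}" unfolding edges_map_upt by blast
    define a where "a = g i"
    have yi: "d y \<le> d u" "y = (par ^^ (d u - d y)) u" using tanc_idx[OF st(5) st(9)] by auto
    have aV: "a \<in> V" "d a = d u - i" using funpow_props[OF st(5), of i] i yi unfolding a_def g_def by auto
    have yu: "y \<noteq> u" using i yi by auto
    define m where "m = d u - d y"
    define j where "j = m - 1 - i"
    have "d y \<noteq> 0" using d0 st(2,4) by blast
    then have mlt: "m < d u" unfolding m_def using i by simp
    have j1: "d a - d y - 1 = j" unfolding j_def m_def aV(2) using i yi by simp
    have j2: "Suc j < d a" unfolding j_def aV(2) using mlt i unfolding m_def by simp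
    have "j + i = d u - d y - 1" using i by (simp add: j_def m_def)
    then have j3: "(par ^^ j) a = (par ^^ (d u - d y - 1)) u" unfolding a_def g_def fp by simp
    have "Suc j + i = d u - d y" using i by (simp add: j_def m_def)
    then have j4: "(par ^^ Suc j) a = y" unfolding a_def g_def fp using yi(2) by simp
    have "y \<in> LT a" unfolding LT_def using j2 st(12)[OF yu] j3 j4
      by (intro CollectI exI[of _ j]) simp
    moreover have "x \<in> set (piC E s par uC vC y (comp_of V E s par y ((par ^^ (d a - d y - 1)) a)))"
      using st(13)[OF yu] j1 j3 by simp
    moreover have "a \<in> e" using i(2) a_def by simp
    ultimately show ?thesis unfolding SetB_def GB_def FB_def using aV(1) by blast
  qed
qed

lemma LT_prop: assumes a: "a \<in> V" and y: "y \<in> LT a"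
  shows "y \<in> V" "y \<noteq> s" "(par ^^ (d a - d y - 1)) a \<in> strict_subtree V E s par y"
proof -
  obtain j where j: "y = (par ^^ Suc j) a" "Suc j < d a" using y unfolding LT_def by blast
  have yV: "y \<in> V" "d y = d a - Suc j" using funpow_props[OF a, of "Suc j"] j by auto
  then show "y \<in> V" by simp
  show ys: "y \<noteq> s" using yV j d_s by auto
  have jj: "d a - d y - 1 = j" using yV j by simp
  define w where "w = (par ^^ j) a"
  have wV: "w \<in> V" "d w = d a - j" using funpow_props[OF a, of j] j unfolding w_def by auto
  have "w \<noteq> s" using wV j d_s by auto
  moreover have "par w = y" unfolding w_def j by simp
  ultimately have "tanc E s par y w" using tanc_par[OF wV(1)] by simp
  moreover have "w \<noteq> y" using wV yV j by auto
  ultimately show "(par ^^ (d a - d y - 1)) a \<in> strict_subtree V E s par y"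
    unfolding jj w_def[symmetric] strict_subtree_def subtree_def using wV by auto
qed

lemma card_V_pos: "card V \<ge> 1"
  using sV finV by (metis One_nat_def Suc_leI card_gt_0_iff empty_iff)

lemma count_bound:
  assumes eE: "e \<in> E"
  shows "real (card {(x, y). ordered_light_pair V E s par h uC vC x y \<and>
                    e \<in> edges_of (light_path E s par uC vC Csel x y)})
     \<le> 2 * ((real (diameter V E) + 1) * (1 + log 2 (real (card V))))
       + 2 * (log 2 (real (card V)) * (real (diameter V E) + 2))"
proof -
  define Dm where "Dm = real (diameter V E)"
  define Lg where "Lg = log 2 (real (card V))"
  have Lg0: "Lg \<ge> 0" unfolding Lg_def using card_V_pos by simp
  obtain p q where pq: "e = {p, q}" using eE G unfolding graph_def by blast
  have fe: "finite (e \<inter> V)" "card (e \<inter> V) \<le> 2"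
  proof -
    show "finite (e \<inter> V)" using pq by simp
    have "card (e \<inter> V) \<le> card e" using pq by (intro card_mono) auto
    also have "\<dots> \<le> 2" unfolding pq by (simp add: card_insert_if)
    finally show "card (e \<inter> V) \<le> 2" .
  qed
  have A_in: "real (card (GA a)) \<le> real (card (AX a)) * (1 + Lg) \<and> finite (GA a)"
    if "a \<in> e \<inter> V" for a
  proof -
    have fA: "finite (AX a)" unfolding AX_def by simp
    have b: "finite (FA a x) \<and> real (card (FA a x)) \<le> 1 + Lg" if x: "x \<in> AX a" for x
    proof -
      define u where "u = uC x (comp_of V E s par x a)"
      have uV: "u \<in> V" using x uC_V unfolding AX_def u_def by blast
      have "card (Pair x ` insert u (LT u)) \<le> card (insert u (LT u))" by (rule card_image_le) (simp add: LT_finite)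
      also have "\<dots> \<le> Suc (card (LT u))" by (simp add: card_insert_if LT_finite)
      finally have "real (card (Pair x ` insert u (LT u))) \<le> 1 + real (card (LT u))" by simp
      also have "\<dots> \<le> 1 + Lg" using LT_card[OF uV] unfolding Lg_def by simp
      finally show ?thesis unfolding FA_def u_def[symmetric] using LT_finite by simp
    qed
    have "real (card (GA a)) \<le> real (card (AX a)) * (1 + Lg)" unfolding GA_def
      by (rule union_bound(1)[OF fA]) (use b in auto)
    moreover have "finite (GA a)" unfolding GA_def
      by (rule union_bound(2)[OF fA, of _ "1 + Lg"]) (use b in auto)
    ultimately show ?thesis by simp
  qed
  have A_out: "real (card (AX a)) * (1 + Lg) \<le> (Dm + 1) * (1 + Lg)" if "a \<in> e \<inter> V" for a
  proof -
    have "card (AX a) \<le> card (set (rootpath E s par a))" unfolding AX_def by (intro card_mono) auto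
    also have "\<dots> \<le> Suc (d a)" using card_length[of "rootpath E s par a"] length_rootpath by simp
    also have "\<dots> \<le> Suc (diameter V E)" using d_le_D that by simp
    finally have "real (card (AX a)) \<le> Dm + 1" unfolding Dm_def by simp
    then show ?thesis using Lg0 by (intro mult_right_mono) auto
  qed
  have SA: "real (card (SetA e)) \<le> 2 * ((Dm + 1) * (1 + Lg))" "finite (SetA e)"
  proof -
    have "real (card (SetA e)) \<le> real (card (e \<inter> V)) * ((Dm + 1) * (1 + Lg))"
      unfolding SetA_def
    proof (rule union_bound(1)[OF fe(1)])
      fix a assume "a \<in> e \<inter> V"
      then show "finite (GA a)" "real (card (GA a)) \<le> (Dm + 1) * (1 + Lg)"
        using A_in A_out by (blast, fastforce)
    qed
    also have "\<dots> \<le> 2 * ((Dm + 1) * (1 + Lg))" using fe(2) Lg0 Dm_def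
      by (intro mult_right_mono) auto
    finally show "real (card (SetA e)) \<le> 2 * ((Dm + 1) * (1 + Lg))" .
    show "finite (SetA e)" unfolding SetA_def using fe(1) A_in by blast
  qed
  have B_in: "real (card (GB a)) \<le> real (card (LT a)) * (Dm + 2) \<and> finite (GB a)"
    if a: "a \<in> e \<inter> V" for a
  proof -
    have b: "finite (FB a y) \<and> real (card (FB a y)) \<le> Dm + 2" if y: "y \<in> LT a" for y
    proof -
      define P where "P = piC E s par uC vC y (comp_of V E s par y ((par ^^ (d a - d y - 1)) a))"
      have lp: "length P \<le> diameter V E + 2" unfolding P_def using LT_prop[of a y] a y piC_len by blast
      have "card ((\<lambda>x. (x, y)) ` set P) \<le> card (set P)" by (rule card_image_le) simp
      also have "\<dots> \<le> length P" by (rule card_length)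
      finally have "real (card ((\<lambda>x. (x, y)) ` set P)) \<le> Dm + 2" using lp unfolding Dm_def by simp
      then show ?thesis unfolding FB_def P_def by simp
    qed
    have "real (card (GB a)) \<le> real (card (LT a)) * (Dm + 2)" unfolding GB_def
      by (rule union_bound(1)[OF LT_finite]) (use b in auto)
    moreover have "finite (GB a)" unfolding GB_def
      by (rule union_bound(2)[OF LT_finite, where b = "Dm + 2"]) (use b in auto)
    ultimately show ?thesis by simp
  qed
  have SB: "real (card (SetB e)) \<le> 2 * (Lg * (Dm + 2))" "finite (SetB e)"
  proof -
    have "real (card (SetB e)) \<le> real (card (e \<inter> V)) * (Lg * (Dm + 2))"
      unfolding SetB_def
    proof (rule union_bound(1)[OF fe(1)])
      fix a assume a: "a \<in> e \<inter> V"
      have "real (card (LT a)) * (Dm + 2) \<le> Lg * (Dm + 2)"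
        using LT_card[of a] a unfolding Lg_def Dm_def by (intro mult_right_mono) auto
      then show "finite (GB a)" "real (card (GB a)) \<le> Lg * (Dm + 2)"
        using B_in[OF a] by auto
    qed
    also have "\<dots> \<le> 2 * (Lg * (Dm + 2))" using fe(2) Lg0 Dm_def
      by (intro mult_right_mono) auto
    finally show "real (card (SetB e)) \<le> 2 * (Lg * (Dm + 2))" .
    show "finite (SetB e)" unfolding SetB_def using fe(1) B_in by blast
  qed
  have "{(x, y). ordered_light_pair V E s par h uC vC x y \<and> e \<in> edges_of (light_path E s par uC vC Csel x y)}
     \<subseteq> SetA e \<union> SetB e" using cover by blast
  then have "card {(x, y). ordered_light_pair V E s par h uC vC x y \<and> e \<in> edges_of (light_path E s par uC vC Csel x y)}
     \<le> card (SetA e \<union> SetB e)" using SA(2) SB(2) by (intro card_mono) auto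
  also have "\<dots> \<le> card (SetA e) + card (SetB e)" by (rule card_Un_le)
  finally show ?thesis using SA(1) SB(1) unfolding Dm_def Lg_def by linarith
qed

lemma path_len:
  assumes olp: "ordered_light_pair V E s par h uC vC x y"
  shows "real (length (light_path E s par uC vC Csel x y) - 1) \<le> 14 * real (diameter V E)"
proof -
  define u where "u = uC x (Csel x y)"
  define v where "v = vC x (Csel x y)"
  note st = olp_struct[OF olp, folded u_def v_def]
  have "length (light_path E s par uC vC Csel x y) = Suc (d v - d x) + Suc (d u - d y)"
    using st(11) by simp
  moreover have "d v \<le> diameter V E" "d u \<le> diameter V E" "d x \<le> diameter V E"
    using d_le_D st(1,5,10) by auto
  moreover have "d x \<noteq> 0" using d0 st(1,3) by blast
  ultimately have "length (light_path E s par uC vC Csel x y) - 1 \<le> 3 * diameter V E" by linarith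
  then show ?thesis by linarith
qed

end

lemma main_aux:
  fixes V :: "'a set"
  assumes A: "graph V E \<and> connected_graph V E \<and> no_cut_vertex V E \<and>
        D = diameter V E \<and> bfs_tree V E s par \<and> heavy_child_fun V E s par h \<and>
        comp_edges V E s par uC vC \<and> light_choice V E s par h uC vC Csel"
  shows "(\<forall>x y. ordered_light_pair V E s par h uC vC x y \<longrightarrow>
           real (length (light_path E s par uC vC Csel x y) - 1) \<le> 14 * real D) \<and>
        (\<forall>e\<in>E. real (card {(x, y). ordered_light_pair V E s par h uC vC x y \<and>
                                  e \<in> edges_of (light_path E s par uC vC Csel x y)})
                \<le> 14 * real D * (log 2 (real (card V))) ^ 1)"
proof (rule conjI)
  interpret bt2 V E s par h uC vC Csel
    using A by unfold_locales auto
  have DD: "D = diameter V E" using A by simp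
  show "\<forall>x y. ordered_light_pair V E s par h uC vC x y \<longrightarrow>
           real (length (light_path E s par uC vC Csel x y) - 1) \<le> 14 * real D"
    using path_len DD by blast
next
  interpret bt2 V E s par h uC vC Csel
    using A by unfold_locales auto
  have DD: "D = diameter V E" using A by simp
  show "\<forall>e\<in>E. real (card {(x, y). ordered_light_pair V E s par h uC vC x y \<and>
                                  e \<in> edges_of (light_path E s par uC vC Csel x y)})
                \<le> 14 * real D * (log 2 (real (card V))) ^ 1"
  proof
    fix e assume eE: "e \<in> E"
    obtain p q where pq: "e = {p, q}" "p \<in> V" "q \<in> V" "p \<noteq> q" using eE G unfolding graph_def by blast
    have "card {p, q} \<le> card V" using pq finV by (intro card_mono) auto
    then have n2: "2 \<le> card V" using pq by simp
    define L where "L = log 2 (real (card V))"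
    have L1: "1 \<le> L" unfolding L_def using n2 by simp
    obtain w where w: "w \<in> V" "w \<noteq> s" using pq by blast
    have "d w \<noteq> 0" using d0 w by blast
    then have D1: "1 \<le> real D" using d_le_D[OF w(1)] DD by simp
    have cb: "real (card {(x, y). ordered_light_pair V E s par h uC vC x y \<and>
                                  e \<in> edges_of (light_path E s par uC vC Csel x y)})
       \<le> 2 * ((real D + 1) * (1 + L)) + 2 * (L * (real D + 2))"
      using count_bound[OF eE] DD unfolding L_def by simp
    have e1: "2 * ((real D + 1) * (1 + L)) + 2 * (L * (real D + 2)) = 4 * (real D * L) + 2 * real D + 2 + 6 * L"
      by (simp add: algebra_simps)
    have f1: "real D \<le> real D * L" "L \<le> real D * L" "1 \<le> real D * L"
      using D1 L1 by (auto intro: mult_right_mono mult_left_mono order_trans[OF _ mult_mono, of 1 1 1])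
    show "real (card {(x, y). ordered_light_pair V E s par h uC vC x y \<and>
                                  e \<in> edges_of (light_path E s par uC vC Csel x y)})
                \<le> 14 * real D * (log 2 (real (card V))) ^ 1"
      using cb e1 f1 unfolding L_def[symmetric] by (simp add: algebra_simps)
  qed
qed


theorem lemma4p19:
  "\<exists>(c::real) (k::nat). c > 0 \<and>
     (\<forall>(V::nat set) E D s par h uC vC Csel.
        graph V E \<and> connected_graph V E \<and> no_cut_vertex V E \<and>
        D = diameter V E \<and> bfs_tree V E s par \<and> heavy_child_fun V E s par h \<and>
        comp_edges V E s par uC vC \<and> light_choice V E s par h uC vC Csel \<longrightarrow>
        (\<forall>x y. ordered_light_pair V E s par h uC vC x y \<longrightarrow>
           real (length (light_path E s par uC vC Csel x y) - 1) \<le> c * real D) \<and>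
        (\<forall>e\<in>E. real (card {(x, y). ordered_light_pair V E s par h uC vC x y \<and>
                                  e \<in> edges_of (light_path E s par uC vC Csel x y)})
                \<le> c * real D * (log 2 (real (card V))) ^ k))"
  apply (rule exI[of _ 14], rule exI[of _ 1], rule conjI, simp)
  apply (intro allI impI)
  apply (rule main_aux)
  apply assumption
  done

end
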